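(* Assume the standing hypotheses (H). There is $K_3\in L^4_{\mathfrak P}$ such that for every $(t,\mathbf x)\in\mathbf D$ and $\boldsymbol\zeta\in\mathbf Z$, $$|H_3(t,\mathbf x;\boldsymbol\zeta)-H_3(t,\mathbf x;\boldsymbol\zeta^0(\Sigma))|\le K_3(t,\mathbf x)\|\boldsymbol\zeta-\boldsymbol\zeta^0(\Sigma)\|\max\big(1,\|\boldsymbol\zeta-\boldsymbol\zeta^0(\Sigma)\|\big).$$
   Context: Setting. Fix $T>0$, $S_0>0$, $\Sigma_0>0$, $A_0\in\mathbb R$. $\Omega$: continuous paths $\omega=(\omega^S,\omega^\Sigma,\omega^A):[0,T]\to\mathbb R^3$ with $\omega_0=(S_0,\Sigma_0,A_0)$ (uniform topology, Borel $\sigma$-algebra $\mathcal F$); $S,\Sigma,A$ coordinate processes, $\mathbb F$ their raw filtration, $M_t=\sup_{u\le t}S_u$, $\mathbf X_t=(S_t,A_t,M_t,\Sigma_t)$. $\mathbf G=\mathbb R_+\times\mathbb R\times\mathbb R_+$, $\mathbf D^0=(0,T)\times\mathbf G\times\mathbb R_+$ (points $(t,\mathbf x)$, $\mathbf x=(S,A,M,\Sigma)$); $0<\underline\Sigma<\Sigma_0<\overline\Sigma$, $\mathbf D=(0,T)\times\mathbf G\times[\underline\Sigma,\overline\Sigma]$. $\|\cdot\|$ Euclidean norm, $\mathbf e_4$ fourth unit vector, $x^-=\max(-x,0)$. Call: $\mathcal C(t,S,\Sigma)$ with $\mathcal C_t+\frac12\Sigma^2S^2\mathcal C_{SS}=0$,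 $\mathcal C(T_{\mathsf C},S,\Sigma)=\mathsf C(S)$. $b^{\mathcal C}(t,\mathbf x;\boldsymbol\zeta)=\nu\mathcal C_\Sigma+\frac12S^2\mathcal C_{SS}(\sigma^2-\Sigma^2)+\sigma\eta S\mathcal C_{S\Sigma}+\frac12(\eta^2+\xi)\mathcal C_{\Sigma\Sigma}$ for $\boldsymbol\zeta=(\nu,\sigma,\eta,\xi)$. Models: $\mathfrak P^{00}$ = probability measures $P$ on $(\Omega,\mathcal F)$ with progressively measurable $\boldsymbol\zeta^P=(\nu^P,\sigma^P,\eta^P,\xi^P)$ such that $S$, $\Sigma-\int_0^\cdot\nu^P_tdt$ are continuous local $P$-martingales with $d\langle S\rangle_t=S_t^2(\sigma^P_t)^2dt$, $d\langle\Sigma\rangle_t=((\eta^P_t)^2+\xi^P_t)dt$, $d\langle S,\Sigma\rangle_t=S_t\sigma^P_t\eta^P_tdt$, $S,\Sigma>0$, $\xi^P\ge0$, $b^{\mathcal C}(t,\mathbf X_t;\boldsymbol\zeta^P_t)=0$ $dt\times P$-a.e.; for Borel $\alpha,\beta,\gamma,\delta:[0,T]\times\mathbb R^3\to\mathbb R$, $\mathfrak P^0$ = those $P$ with $dA_t=(\alpha+\frac12(\sigma^P_t)^2\beta)dt+\gamma dS_t+\delta dM_t$. $\boldsymbol\zeta^0(\Sigma)=(0,\Sigma,0,0)^\top$; reference model: $\boldsymbol\zeta^P_t=\boldsymbol\zeta^0(\Sigma_t)$ a.e. Non-traded option: $\mathcal V(\cdot,\Sigma)$ solves $\mathcal V_t+(\alpha+\frac12\beta\Sigma^2)\mathcal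 V_A+\frac12\Sigma^2S^2(\mathcal V_{SS}+2\gamma\mathcal V_{SA}+\gamma^2\mathcal V_{AA})=0$ on $(0,T)\times\mathbf G$, $\delta\mathcal V_A+\mathcal V_M=0$ on $\{S\ge M\}$, $\mathcal V(T,\cdot,\Sigma)=\mathsf V$. $\Delta=\mathcal V_S+\gamma\mathcal V_A$, $\Gamma=\mathcal V_{SS}+2\gamma\mathcal V_{SA}+\gamma^2\mathcal V_{AA}$, $\frac{\partial\Delta}{\partial\Sigma}:=\mathcal V_{S\Sigma}+\gamma\mathcal V_{A\Sigma}$. P&L: $V_t=\mathcal V(t,\mathbf X_t)$, $C_t=\mathcal C(t,S_t,\Sigma_t)$; strategies $\boldsymbol\upsilon=(\theta,\phi)$ real locally bounded progressive; $Y^{\boldsymbol\upsilon,P}_t=Y_0+V_0+\int_0^t\theta dS+\int_0^t\phi dC-V_t$. Preferences: $\Psi=\mathrm{diag}(\psi_\nu,\psi_\sigma,\psi_\eta,\psi_\xi)$, positive; a utility $U$, strategy set $\mathfrak Y$, model set $\mathfrak P\subset\mathfrak P^0$. Candidate control: $\mathbf c=(\mathcal C_\Sigma,\Sigma S^2\mathcal C_{SS},\Sigma S\mathcal C_{S\Sigma},\frac12\mathcal C_{\Sigma\Sigma})^\top$, $\mathbf v=(\mathcal V_\Sigma,\Sigma(\beta\mathcal V_A+S^2\Gamma),\Sigma S\frac{\partial\Delta}{\partial\Sigma},\frac12\mathcal V_{\Sigma\Sigma})^\top$; $\lambda=\frac{\mathbf c^\top\Psi\mathbf v}{\mathbf c^\top\Psi\mathbf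 c}$ if $\mathcal V_{\Sigma\Sigma}-\frac{\mathbf c^\top\Psi\mathbf v}{\mathbf c^\top\Psi\mathbf c}\mathcal C_{\Sigma\Sigma}\ge0$, else $\lambda=\frac{\mathbf c^\top\Psi\mathbf v-\frac14\mathcal C_{\Sigma\Sigma}\mathcal V_{\Sigma\Sigma}\psi_\xi}{\mathbf c^\top\Psi\mathbf c-\frac14\mathcal C_{\Sigma\Sigma}^2\psi_\xi}$; $\mu=\frac12(\mathcal V_{\Sigma\Sigma}-\lambda\mathcal C_{\Sigma\Sigma})^-$; $\widetilde{\boldsymbol\zeta}=\Psi(\mathbf v-\lambda\mathbf c+\mu\mathbf e_4)$; $\boldsymbol\zeta^\psi=\boldsymbol\zeta^0(\Sigma)+\widetilde{\boldsymbol\zeta}\mathbf 1_{\{\underline\Sigma<\Sigma<\overline\Sigma\}}\psi$; $\widetilde g=\mathbf v^\top\widetilde{\boldsymbol\zeta}$. Cash-equivalent PDE: for $\Sigma\in[\underline\Sigma,\overline\Sigma]$, $\widetilde w_t+(\alpha+\frac12\beta\Sigma^2)\widetilde w_A+\frac12\Sigma^2S^2(\widetilde w_{SS}+2\gamma\widetilde w_{SA}+\gamma^2\widetilde w_{AA})+\frac12\widetilde g(\cdot,\Sigma)=0$ on $(0,T)\times\mathbf G$, $\delta\widetilde w_A+\widetilde w_M=0$ on $\{S\ge M\}$, $\widetilde w(T,\cdot,\Sigma)=0$. $L^p_{\mathfrak P}$: Borel $K$ on $\mathbf D^0$ with $\sup_{P\in\mathfrak P}E^P[\int_0^T|K(t,\mathbf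 X_t)|^pdt]^{1/p}<\infty$. Candidate asymptotic model family: $(P^\psi)_{\psi\in(0,\psi_0)}\subset\mathfrak P$, $\psi_0\in(0,1)$, with $K_0\in L^4_{\mathfrak P}$ and $\|\boldsymbol\zeta^{P^\psi}_t-\boldsymbol\zeta^\psi(t,\mathbf X_t)\|\le K_0(t,\mathbf X_t)\psi^2$ $dt\times P^\psi$-a.e. Assumption (A): (a) $\exists K_{\mathfrak Y}$: $Y^{\boldsymbol\upsilon,P}>-K_{\mathfrak Y}$ $dt\times P$-a.e. for all $\boldsymbol\upsilon\in\mathfrak Y$, $P\in\mathfrak P$; (b) $\mathfrak P$ contains a candidate asymptotic model family and a reference model, and constants $\underline\nu<0<\overline\nu$, $0<\underline\sigma<\underline\Sigma$, $\overline\Sigma<\overline\sigma$, $\underline\eta<0<\overline\eta$, $\overline\xi>0$ bound $\nu^P,\sigma^P,\eta^P,\xi^P,\Sigma$ in $[\underline\nu,\overline\nu],[\underline\sigma,\overline\sigma],[\underline\eta,\overline\eta],[0,\overline\xi],[\underline\Sigma,\overline\Sigma]$ $dt\times P$-a.e. for all $P\in\mathfrak P$; (c) $T_{\mathsf C}\ge T$, $\mathcal C\in C^{1,2,2}((0,T_{\mathsf C})\times\mathbb R_+^2)\cap C([0,T_{\mathsf C}]\times\overline{\mathbb R}_+^2)$ solves the call PDE classically for $\Sigma\in[\underline\Sigma,\overline\Sigma]$, $\mathcal C_\Sigma\ne0$ and $|\mathcal C_{\Sigma\Sigma}|\le K_{\mathcal C}(|\mathcal C_\Sigma|+|S^2\mathcal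 C_{SS}|+|S\mathcal C_{S\Sigma}|)$ on $(0,T)\times\mathbb R_+\times[\underline\Sigma,\overline\Sigma]$ with $K_{\mathcal C}\in L^2_{\mathfrak P}$; (d) $\mathcal V\in C^{1,2,2,1,2}(\mathbf D^0)\cap C(\overline{\mathbf D^0})$ solves the $\mathcal V$-PDE classically for $\Sigma\in[\underline\Sigma,\overline\Sigma]$, $|\mathcal V_\Sigma|,|\beta\mathcal V_A+S^2\Gamma|,|S\frac{\partial\Delta}{\partial\Sigma}|,|\mathcal V_{\Sigma\Sigma}|\le K_{\mathcal V}$ on $\mathbf D$; (e) $\widetilde w\in C^{1,2,2,1,2}(\mathbf D^0)\cap C(\overline{\mathbf D^0})$ solves the cash-equivalent PDE classically for $\Sigma\in[\underline\Sigma,\overline\Sigma]$, $0\le\widetilde w\le K_{\widetilde w}$ on $\mathbf D$, and $\widetilde w_\Sigma,S(\widetilde w_S+\gamma\widetilde w_A),\beta\widetilde w_A+S^2(\widetilde w_{SS}+2\gamma\widetilde w_{SA}+\gamma^2\widetilde w_{AA}),S(\widetilde w_{S\Sigma}+\gamma\widetilde w_{A\Sigma}),\widetilde w_{\Sigma\Sigma}\in L^4_{\mathfrak P}$; (f) $U\in C^3(\mathbb R)$, $U'>0$, $U''<0$, $-U''/U'$ nonincreasing. Additional notation. $\mathbf Z=[\underline\nu,\overline\nu]\times[\underline\sigma,\overline\sigma]\times[\underline\eta,\overline\eta]\times[0,\overline\xi]$. $H_3(t,\mathbf x;\boldsymbol\zeta)=\nu\widetilde w_\Sigma+(\alpha+\frac12\beta\sigma^2)\widetilde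 w_A+\frac12\sigma^2S^2(\widetilde w_{SS}+2\gamma\widetilde w_{SA}+\gamma^2\widetilde w_{AA})+\sigma\eta S(\widetilde w_{S\Sigma}+\gamma\widetilde w_{A\Sigma})+\frac12(\eta^2+\xi)\widetilde w_{\Sigma\Sigma}$ for $\boldsymbol\zeta=(\nu,\sigma,\eta,\xi)$. Delta-vega hedge $\boldsymbol\upsilon^\star_t=(\Delta-\frac{\mathcal V_\Sigma}{\mathcal C_\Sigma}\mathcal C_S,\frac{\mathcal V_\Sigma}{\mathcal C_\Sigma})(t,\mathbf X_t)$. Standing hypotheses (H): Assumption (A) holds, $\boldsymbol\upsilon^\star\in\mathfrak Y$, and $(P^\psi)_{\psi\in(0,\psi_0)}\subset\mathfrak P$ is a candidate asymptotic model family. *)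

theory Defs
  imports "HOL-Probability.Probability"
begin

text \<open>Paths omega = (omega^S, omega^Sigma, omega^A) on [0,T]; states x = (S, A, M, Sigma);
  control parameters zeta = (nu, sigma, eta, xi).\<close>

type_synonym path = "real \<Rightarrow> real \<times> real \<times> real"
type_synonym state = "real \<times> real \<times> real \<times> real"
type_synonym ctrl = "real \<times> real \<times> real \<times> real"

definition Omega :: "real \<Rightarrow> real \<Rightarrow> real \<Rightarrow> real \<Rightarrow> path set" where
  "Omega T S0 Sig0 A0 =
     {\<omega>. continuous_on {0..T} \<omega> \<and> \<omega> \<in> extensional {0..T} \<and> \<omega> 0 = (S0, Sig0, A0)}"

text \<open>Sigma-algebra generated by the coordinate maps (= Borel sets of the uniform topology).\<close>
definition path_sigma :: "real \<Rightarrow> real \<Rightarrow> real \<Rightarrow> real \<Rightarrow> path measure" where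
  "path_sigma T S0 Sig0 A0 =
     sigma (Omega T S0 Sig0 A0)
       {{\<omega> \<in> Omega T S0 Sig0 A0. \<omega> t \<in> B} | t B. t \<in> {0..T} \<and> B \<in> sets borel}"

definition Xproc :: "path \<Rightarrow> real \<Rightarrow> state" where
  "Xproc \<omega> t = (fst (\<omega> t), snd (snd (\<omega> t)), (SUP u\<in>{0..t}. fst (\<omega> u)), fst (snd (\<omega> t)))"

definition sig_of :: "state \<Rightarrow> real" where
  "sig_of x = snd (snd (snd x))"

definition D0 :: "real \<Rightarrow> (real \<times> state) set" where
  "D0 T = {(t, (S, A, M, Sig)). 0 < t \<and> t < T \<and> 0 < S \<and> 0 < M \<and> 0 < Sig}"

definition Dset :: "real \<Rightarrow> real \<Rightarrow> real \<Rightarrow> (real \<times> state) set" where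
  "Dset T Sl Su = {(t, (S, A, M, Sig)). 0 < t \<and> t < T \<and> 0 < S \<and> 0 < M \<and> Sl \<le> Sig \<and> Sig \<le> Su}"

text \<open>L^p_PP: Borel K on D^0 with sup_{P in PP} E^P[int_0^T |K(t,X_t)|^p dt]^(1/p) < oo
  (equivalently: the expectations are uniformly bounded by a finite constant).
  K is regarded as extended by 0 outside D^0.\<close>
definition inLp :: "real \<Rightarrow> path measure set \<Rightarrow> real \<Rightarrow> (real \<Rightarrow> state \<Rightarrow> real) \<Rightarrow> bool" where
  "inLp T PP p K \<longleftrightarrow>
     (\<lambda>(t, x). indicator (D0 T) (t, x) * K t x) \<in> borel_measurable borel \<and>
     (\<exists>C::real. \<forall>P\<in>PP.
        (\<integral>\<^sup>+ \<omega>. (\<integral>\<^sup>+ t. ennreal (indicator (D0 T) (t, Xproc \<omega> t) * \<bar>K t (Xproc \<omega> t)\<bar> powr p)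
              \<partial>(restrict_space lborel {0..T})) \<partial>P) \<le> ennreal C)"

definition zeta0 :: "real \<Rightarrow> ctrl" where
  "zeta0 Sig = (0, Sig, 0, 0)"

definition Zset :: "real \<Rightarrow> real \<Rightarrow> real \<Rightarrow> real \<Rightarrow> real \<Rightarrow> real \<Rightarrow> real \<Rightarrow> ctrl set" where
  "Zset nul nuu sl su el eu xu =
     {(nu, s, e, xi). nul \<le> nu \<and> nu \<le> nuu \<and> sl \<le> s \<and> s \<le> su \<and> el \<le> e \<and> e \<le> eu \<and> 0 \<le> xi \<and> xi \<le> xu}"

text \<open>H_3(t,x;zeta), with the partial derivatives of w~ passed as functions:
  wSig = w_Sigma, wA = w_A, wSS = w_SS, wSA = w_SA, wAA = w_AA,
  wSSig = w_{S Sigma}, wASig = w_{A Sigma}, wSigSig = w_{Sigma Sigma}.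
  alpha, beta, gamma are functions of (t, S, A, M).\<close>
definition H3 ::
  "(real \<Rightarrow> real \<Rightarrow> real \<Rightarrow> real \<Rightarrow> real) \<Rightarrow> (real \<Rightarrow> real \<Rightarrow> real \<Rightarrow> real \<Rightarrow> real) \<Rightarrow>
   (real \<Rightarrow> real \<Rightarrow> real \<Rightarrow> real \<Rightarrow> real) \<Rightarrow>
   (real \<Rightarrow> state \<Rightarrow> real) \<Rightarrow> (real \<Rightarrow> state \<Rightarrow> real) \<Rightarrow> (real \<Rightarrow> state \<Rightarrow> real) \<Rightarrow>
   (real \<Rightarrow> state \<Rightarrow> real) \<Rightarrow> (real \<Rightarrow> state \<Rightarrow> real) \<Rightarrow> (real \<Rightarrow> state \<Rightarrow> real) \<Rightarrow>
   (real \<Rightarrow> state \<Rightarrow> real) \<Rightarrow> (real \<Rightarrow> state \<Rightarrow> real) \<Rightarrow>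
   real \<Rightarrow> state \<Rightarrow> ctrl \<Rightarrow> real" where
  "H3 \<alpha> \<beta> \<gamma> wSig wA wSS wSA wAA wSSig wASig wSigSig t x \<zeta> =
     (case x of (S, A, M, Sig) \<Rightarrow> case \<zeta> of (nu, s, e, xi) \<Rightarrow>
        nu * wSig t x
        + (\<alpha> t S A M + 1/2 * \<beta> t S A M * s\<^sup>2) * wA t x
        + 1/2 * s\<^sup>2 * S\<^sup>2 * (wSS t x + 2 * \<gamma> t S A M * wSA t x + (\<gamma> t S A M)\<^sup>2 * wAA t x)
        + s * e * S * (wSSig t x + \<gamma> t S A M * wASig t x)
        + 1/2 * (e\<^sup>2 + xi) * wSigSig t x)"

end

theory Submission
  imports Defs
begin


lemma Omega_gen_Pow:
  "{{\<omega> \<in> Omega T S0 Sig0 A0. \<omega> t \<in> B} | t B. t \<in> {0..T} \<and> B \<in> sets borel} \<subseteq> Pow (Omega T S0 Sig0 A0)"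
  by auto

lemma space_path_sigma: "space (path_sigma T S0 Sig0 A0) = Omega T S0 Sig0 A0"
  unfolding path_sigma_def by (rule space_measure_of[OF Omega_gen_Pow])

lemma eval_meas:
  assumes s: "s \<in> {0..T}"
  shows "(\<lambda>\<omega>. \<omega> s) \<in> path_sigma T S0 Sig0 A0 \<rightarrow>\<^sub>M (borel :: (real \<times> real \<times> real) measure)"
proof (rule measurableI)
  fix x assume "x \<in> space (path_sigma T S0 Sig0 A0)"
  show "x s \<in> space borel" by simp
next
  fix B :: "(real \<times> real \<times> real) set" assume B: "B \<in> sets borel"
  have "(\<lambda>\<omega>. \<omega> s) -` B \<inter> space (path_sigma T S0 Sig0 A0) = {\<omega> \<in> Omega T S0 Sig0 A0. \<omega> s \<in> B}"
    by (auto simp: space_path_sigma)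
  also have "\<dots> \<in> sets (path_sigma T S0 Sig0 A0)"
    unfolding path_sigma_def sets_measure_of[OF Omega_gen_Pow]
    by (rule sigma_sets.Basic) (use s B in blast)
  finally show "(\<lambda>\<omega>. \<omega> s) -` B \<inter> space (path_sigma T S0 Sig0 A0) \<in> sets (path_sigma T S0 Sig0 A0)" .
qed

lemma eval_joint:
  assumes T: "0 < T"
  shows "(\<lambda>p. fst p (snd p)) \<in> path_sigma T S0 Sig0 A0 \<Otimes>\<^sub>M restrict_space lborel {0..T} \<rightarrow>\<^sub>M (borel :: (real \<times> real \<times> real) measure)"
proof -
  define PR where "PR = path_sigma T S0 Sig0 A0 \<Otimes>\<^sub>M restrict_space lborel {0..T}"
  define cl :: "nat \<Rightarrow> int \<Rightarrow> real" where "cl n k = T * real_of_int (max 0 (min k (int (Suc n)))) / real (Suc n)" for n k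
  define g :: "nat \<Rightarrow> path \<times> real \<Rightarrow> int" where "g n p = \<lceil>real (Suc n) * snd p / T\<rceil>" for n p
  define f where "f n p = fst p (cl n (g n p))" for n p
  have clin: "cl n k \<in> {0..T}" for n k
  proof -
    have "0 \<le> real_of_int (max 0 (min k (int (Suc n))))" by simp
    moreover have "real_of_int (max 0 (min k (int (Suc n)))) \<le> real (Suc n)" by linarith
    moreover have "T * real_of_int (max 0 (min k (int (Suc n)))) \<le> T * real (Suc n)"
      using T calculation(2) by (intro mult_left_mono) auto
    ultimately show ?thesis using T unfolding cl_def
      by (auto simp: field_simps)
  qed
  have fm: "f n \<in> PR \<rightarrow>\<^sub>M borel" for n
  proof -
    have "(\<lambda>p. (\<lambda>k. fst p (cl n k)) (g n p) ) \<in> PR \<rightarrow>\<^sub>M borel"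
    proof (rule measurable_compose_countable[where f="\<lambda>k p. fst p (cl n k)"])
      fix k
      show "(\<lambda>p. fst p (cl n k)) \<in> PR \<rightarrow>\<^sub>M borel"
        unfolding PR_def by (rule measurable_compose[OF measurable_fst eval_meas[OF clin]])
    next
      have "(\<lambda>p. real (Suc n) * snd p / T) \<in> PR \<rightarrow>\<^sub>M borel"
      proof -
        have "(\<lambda>x::real. real (Suc n) * x / T) \<in> borel_measurable lborel" by measurable
        then have "(\<lambda>x::real. real (Suc n) * x / T) \<in> borel_measurable (restrict_space lborel {0..T})"
          by (rule measurable_restrict_space1)
        from measurable_compose[OF measurable_snd this] show ?thesis unfolding PR_def by simp
      qed
      then show "g n \<in> PR \<rightarrow>\<^sub>M count_space UNIV"
        unfolding g_def by (rule measurable_compose[OF _ measurable_real_ceiling])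
    qed
    then show ?thesis unfolding f_def .
  qed
  show ?thesis
    unfolding PR_def[symmetric]
  proof (rule borel_measurable_LIMSEQ_metric[OF fm])
    fix p assume "p \<in> space PR"
    then obtain \<omega> t where p: "p = (\<omega>, t)" and om: "\<omega> \<in> Omega T S0 Sig0 A0" and t: "t \<in> {0..T}"
      unfolding PR_def by (auto simp: space_pair_measure space_path_sigma)
    have cont: "continuous_on {0..T} \<omega>" using om by (simp add: Omega_def)
    define q where "q n = cl n (g n p)" for n
    have qeq: "q n = T * real_of_int \<lceil>real (Suc n) * t / T\<rceil> / real (Suc n)" for n
    proof -
      have "0 \<le> real (Suc n) * t / T" using t T by auto
      then have "0 \<le> \<lceil>real (Suc n) * t / T\<rceil>" by linarith
      moreover have "real (Suc n) * t \<le> real (Suc n) * T" using t by (intro mult_left_mono) auto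
      then have "real (Suc n) * t / T \<le> real (Suc n)" using T by (auto simp: field_simps)
      then have "\<lceil>real (Suc n) * t / T\<rceil> \<le> int (Suc n)"
        by (metis ceiling_mono ceiling_of_nat)
      ultimately show ?thesis unfolding q_def cl_def g_def p by simp
    qed
    have lo: "t \<le> q n" for n
    proof -
      have "real (Suc n) * t / T \<le> real_of_int \<lceil>real (Suc n) * t / T\<rceil>" by (rule le_of_int_ceiling)
      then have "T * (real (Suc n) * t / T) \<le> T * real_of_int \<lceil>real (Suc n) * t / T\<rceil>"
        using T by (intro mult_left_mono) auto
      then have "real (Suc n) * t \<le> T * real_of_int \<lceil>real (Suc n) * t / T\<rceil>" using T by simp
      then show ?thesis unfolding qeq by (simp add: field_simps)
    qed
    have hi: "q n \<le> t + T / real (Suc n)" for n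
    proof -
      have "real_of_int \<lceil>real (Suc n) * t / T\<rceil> \<le> real (Suc n) * t / T + 1" by linarith
      then have "T * real_of_int \<lceil>real (Suc n) * t / T\<rceil> \<le> T * (real (Suc n) * t / T + 1)"
        using T by (intro mult_left_mono) auto
      also have "T * (real (Suc n) * t / T + 1) = real (Suc n) * t + T" using T by (simp add: field_simps)
      finally have "T * real_of_int \<lceil>real (Suc n) * t / T\<rceil> / real (Suc n) \<le> (real (Suc n) * t + T) / real (Suc n)"
        by (intro divide_right_mono) auto
      also have "\<dots> = t + T / real (Suc n)" by (simp add: field_simps)
      finally show ?thesis unfolding qeq .
    qed
    have lim1: "(\<lambda>n. t + T / real (Suc n)) \<longlonglongrightarrow> t"
    proof -
      have "(\<lambda>n. T / real (Suc n)) \<longlonglongrightarrow> 0"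
        using LIMSEQ_Suc[OF lim_const_over_n[of T]] by simp
      from tendsto_add[OF tendsto_const this] show ?thesis by simp
    qed
    have qlim: "q \<longlonglongrightarrow> t"
      by (rule tendsto_sandwich[OF _ _ tendsto_const lim1]) (use lo hi in auto)
    have "(\<lambda>n. \<omega> (q n)) \<longlonglongrightarrow> \<omega> t"
      by (rule continuous_on_tendsto_compose[OF cont qlim t]) (use clin in \<open>simp add: q_def\<close>)
    then show "(\<lambda>n. f n p) \<longlonglongrightarrow> fst p (snd p)"
      unfolding f_def q_def p by simp
  qed
qed

lemma sup_eq:
  assumes om: "\<omega> \<in> Omega T S0 Sig0 A0" and t: "t \<in> {0..T}"
  shows "(SUP u\<in>{0..t}. fst (\<omega> u)) =
         max (fst (\<omega> t)) (SUP r\<in>\<rat> \<inter> {0..T}. (if r \<le> t then fst (\<omega> r) else S0))"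
proof -
  define f where "f u = fst (\<omega> u)" for u
  define D where "D = \<rat> \<inter> {0..T}"
  define g where "g r = (if r \<le> t then f r else S0)" for r
  have cont: "continuous_on {0..T} f" unfolding f_def
    using om by (auto simp: Omega_def intro: continuous_intros)
  have f0: "f 0 = S0" using om by (simp add: Omega_def f_def)
  have bT: "bdd_above (f ` {0..T})"
    by (rule bounded_imp_bdd_above[OF compact_imp_bounded[OF compact_continuous_image[OF cont compact_Icc]]])
  have bt: "bdd_above (f ` {0..t})"
    using t by (auto intro: bdd_above_mono[OF bT])
  have t0: "0 \<le> t" "t \<le> T" using t by auto
  have gle: "g r \<le> (SUP u\<in>{0..t}. f u)" if "r \<in> D" for r
  proof (cases "r \<le> t")
    case True
    then have "r \<in> {0..t}" using that by (auto simp: D_def)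
    then show ?thesis using True by (simp add: g_def cSUP_upper[OF _ bt])
  next
    case False
    have "0 \<in> {0..t}" using t0 by simp
    then have "f 0 \<le> (SUP u\<in>{0..t}. f u)" by (rule cSUP_upper[OF _ bt])
    then show ?thesis using False f0 by (simp add: g_def)
  qed
  have D0: "0 \<in> D" using t0 by (auto simp: D_def)
  have bD: "bdd_above (g ` D)" unfolding bdd_above_def using gle by blast
  have "(SUP u\<in>{0..t}. f u) \<le> max (f t) (SUP r\<in>D. g r)"
  proof (rule cSUP_least)
    show "{0..t} \<noteq> {}" using t0 by simp
  next
    fix u assume u: "u \<in> {0..t}"
    show "f u \<le> max (f t) (SUP r\<in>D. g r)"
    proof (cases "u = t")
      case True then show ?thesis by simp
    next
      case False
      then have ut: "u < t" using u by auto
      have "f u \<le> (SUP r\<in>D. g r)"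
      proof (rule ccontr)
        assume "\<not> ?thesis"
        then have e: "0 < f u - (SUP r\<in>D. g r)" by simp
        have uT: "u \<in> {0..T}" using u t0 by auto
        obtain d where d: "d > 0" and dd: "\<forall>x'\<in>{0..T}. dist x' u < d \<longrightarrow> dist (f x') (f u) < f u - (SUP r\<in>D. g r)"
          using cont uT e unfolding continuous_on_iff by metis
        obtain r where r: "r \<in> \<rat>" "u < r" "r < min t (u + d)"
          using Rats_dense_in_real[of u "min t (u + d)"] ut d by auto
        have rD: "r \<in> D" using r u t0 by (auto simp: D_def)
        have "dist r u < d" using r by (simp add: dist_real_def)
        then have "dist (f r) (f u) < f u - (SUP r\<in>D. g r)" using dd rD by (auto simp: D_def)
        then have "f r > (SUP r\<in>D. g r)" by (simp add: dist_real_def)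
        moreover have "g r = f r" using r by (simp add: g_def)
        moreover have "g r \<le> (SUP r\<in>D. g r)" by (rule cSUP_upper[OF rD bD])
        ultimately show False by simp
      qed
      then show ?thesis by simp
    qed
  qed
  moreover have "max (f t) (SUP r\<in>D. g r) \<le> (SUP u\<in>{0..t}. f u)"
  proof -
    have "f t \<le> (SUP u\<in>{0..t}. f u)" using t0 by (intro cSUP_upper[OF _ bt]) simp
    moreover have "(SUP r\<in>D. g r) \<le> (SUP u\<in>{0..t}. f u)"
      using D0 gle by (intro cSUP_least) auto
    ultimately show ?thesis by simp
  qed
  ultimately have "(SUP u\<in>{0..t}. f u) = max (f t) (SUP r\<in>D. g r)" by (rule antisym)
  then show ?thesis unfolding f_def g_def D_def .
qed

lemma fst_b: "(fst :: real\<times>real\<times>real \<Rightarrow> real) \<in> borel \<rightarrow>\<^sub>M borel"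
  by (intro borel_measurable_continuous_onI continuous_intros)

lemma bdd_g:
  assumes om: "\<omega> \<in> Omega T S0 Sig0 A0" and t: "t \<in> {0..T}"
  shows "bdd_above ((\<lambda>r. if r \<le> t then fst (\<omega> r) else S0) ` (\<rat> \<inter> {0..T}))"
proof -
  define f where "f u = fst (\<omega> u)" for u
  have cont: "continuous_on {0..T} f" unfolding f_def
    using om by (auto simp: Omega_def intro: continuous_intros)
  have f0: "f 0 = S0" using om by (simp add: Omega_def f_def)
  have bT: "bdd_above (f ` {0..T})"
    by (rule bounded_imp_bdd_above[OF compact_imp_bounded[OF compact_continuous_image[OF cont compact_Icc]]])
  then obtain B where B0: "\<forall>x\<in>f ` {0..T}. x \<le> B" unfolding bdd_above_def by blast
  have B: "\<And>u. u \<in> {0..T} \<Longrightarrow> f u \<le> B" using B0 by blast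
  have "0 \<in> {0..T}" using t by auto
  then have "S0 \<le> B" using B f0 by force
  then show ?thesis using B unfolding bdd_above_def f_def by (intro exI[of _ B]) auto
qed

lemma sup_joint:
  assumes T: "0 < T"
  shows "(\<lambda>p. SUP u\<in>{0..snd p}. fst (fst p u)) \<in> path_sigma T S0 Sig0 A0 \<Otimes>\<^sub>M restrict_space lborel {0..T} \<rightarrow>\<^sub>M (borel :: real measure)"
proof -
  define PR where "PR = path_sigma T S0 Sig0 A0 \<Otimes>\<^sub>M restrict_space lborel {0..T}"
  have sp: "space PR = Omega T S0 Sig0 A0 \<times> {0..T}"
    unfolding PR_def by (simp add: space_pair_measure space_path_sigma)
  have E: "(\<lambda>p. fst (fst p (snd p))) \<in> PR \<rightarrow>\<^sub>M borel"
    unfolding PR_def by (rule measurable_compose[OF eval_joint[OF T] fst_b])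
  have snd_m: "(\<lambda>p. snd p) \<in> PR \<rightarrow>\<^sub>M (borel :: real measure)"
  proof -
    have "(\<lambda>x::real. x) \<in> borel_measurable (restrict_space lborel {0..T})"
      by (rule measurable_restrict_space1) simp
    from measurable_compose[OF measurable_snd this] show ?thesis unfolding PR_def by blast
  qed
  have G: "(\<lambda>p. if r \<le> snd p then fst (fst p r) else S0) \<in> PR \<rightarrow>\<^sub>M borel" if r: "r \<in> \<rat> \<inter> {0..T}" for r
  proof (rule measurable_If)
    have rr: "r \<in> {0..T}" using r by auto
    show "(\<lambda>p. fst (fst p r)) \<in> PR \<rightarrow>\<^sub>M borel"
      unfolding PR_def
      by (rule measurable_compose[OF measurable_compose[OF measurable_fst eval_meas[OF rr]] fst_b])
    show "(\<lambda>p. S0) \<in> PR \<rightarrow>\<^sub>M borel" by simp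
    have "{p \<in> space PR. r \<le> snd p} = snd_m' -` {r..} \<inter> space PR" if "snd_m' = snd" for snd_m' :: "path \<times> real \<Rightarrow> real"
      using that by auto
    then have "{p \<in> space PR. r \<le> snd p} = (\<lambda>p. snd p) -` {r..} \<inter> space PR" by blast
    also have "\<dots> \<in> sets PR" by (rule measurable_sets[OF snd_m]) simp
    finally show "{p \<in> space PR. r \<le> snd p} \<in> sets PR" .
  qed
  have mR: "(\<lambda>p. max (fst (fst p (snd p))) (SUP r\<in>\<rat> \<inter> {0..T}. (if r \<le> snd p then fst (fst p r) else S0))) \<in> PR \<rightarrow>\<^sub>M borel"
  proof (rule borel_measurable_max[OF _ E])
    show "(\<lambda>p. SUP r\<in>\<rat> \<inter> {0..T}. (if r \<le> snd p then fst (fst p r) else S0)) \<in> PR \<rightarrow>\<^sub>M borel"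
    proof (rule borel_measurable_cSUP)
      show "countable (\<rat> \<inter> {0..T})" using countable_rat by (rule countable_Int1)
      show "\<And>i. i \<in> \<rat> \<inter> {0..T} \<Longrightarrow> (\<lambda>p. if i \<le> snd p then fst (fst p i) else S0) \<in> PR \<rightarrow>\<^sub>M borel"
        by (rule G)
      fix p assume "p \<in> space PR"
      then show "bdd_above ((\<lambda>i. if i \<le> snd p then fst (fst p i) else S0) ` (\<rat> \<inter> {0..T}))"
        unfolding sp by (intro bdd_g) auto
    qed
  qed
  have eq: "\<And>p. p \<in> space PR \<Longrightarrow> (SUP u\<in>{0..snd p}. fst (fst p u)) = max (fst (fst p (snd p))) (SUP r\<in>\<rat> \<inter> {0..T}. (if r \<le> snd p then fst (fst p r) else S0))"
    unfolding sp by (intro sup_eq) auto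
  show ?thesis unfolding PR_def[symmetric] by (rule measurable_cong[THEN iffD2, OF _ mR]) (rule eq)
qed

lemma pair_b:
  assumes "f \<in> M \<rightarrow>\<^sub>M (borel :: ('a::second_countable_topology) measure)"
      and "g \<in> M \<rightarrow>\<^sub>M (borel :: ('b::second_countable_topology) measure)"
  shows "(\<lambda>x. (f x, g x)) \<in> M \<rightarrow>\<^sub>M (borel :: ('a \<times> 'b) measure)"
  by (subst borel_prod[symmetric]) (rule measurable_Pair[OF assms])

lemma X_joint:
  assumes T: "0 < T"
  shows "(\<lambda>p. (snd p, Xproc (fst p) (snd p))) \<in> path_sigma T S0 Sig0 A0 \<Otimes>\<^sub>M restrict_space lborel {0..T} \<rightarrow>\<^sub>M (borel :: (real \<times> state) measure)"
proof -
  define PR where "PR = path_sigma T S0 Sig0 A0 \<Otimes>\<^sub>M restrict_space lborel {0..T}"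
  have E: "(\<lambda>p. fst p (snd p)) \<in> PR \<rightarrow>\<^sub>M borel" unfolding PR_def by (rule eval_joint[OF T])
  have c1: "(\<lambda>x. fst x :: real) \<in> (borel :: (real\<times>real\<times>real) measure) \<rightarrow>\<^sub>M borel"
    by (intro borel_measurable_continuous_onI continuous_intros)
  have c2: "(\<lambda>x. fst (snd x) :: real) \<in> (borel :: (real\<times>real\<times>real) measure) \<rightarrow>\<^sub>M borel"
    by (intro borel_measurable_continuous_onI continuous_intros)
  have c3: "(\<lambda>x. snd (snd x) :: real) \<in> (borel :: (real\<times>real\<times>real) measure) \<rightarrow>\<^sub>M borel"
    by (intro borel_measurable_continuous_onI continuous_intros)
  have snd_m: "(\<lambda>p. snd p) \<in> PR \<rightarrow>\<^sub>M (borel :: real measure)"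
  proof -
    have "(\<lambda>x::real. x) \<in> borel_measurable (restrict_space lborel {0..T})"
      by (rule measurable_restrict_space1) simp
    from measurable_compose[OF measurable_snd this] show ?thesis unfolding PR_def by blast
  qed
  have S: "(\<lambda>p. SUP u\<in>{0..snd p}. fst (fst p u)) \<in> PR \<rightarrow>\<^sub>M (borel :: real measure)"
    unfolding PR_def by (rule sup_joint[OF T])
  have "(\<lambda>p. (snd p, (fst (fst p (snd p)), snd (snd (fst p (snd p))), (SUP u\<in>{0..snd p}. fst (fst p u)), fst (snd (fst p (snd p)))))) \<in> PR \<rightarrow>\<^sub>M (borel :: (real \<times> state) measure)"
    by (intro pair_b snd_m S measurable_compose[OF E c1] measurable_compose[OF E c2] measurable_compose[OF E c3])
  then show ?thesis unfolding PR_def Xproc_def by simp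
qed

lemma J_meas:
  assumes T: "0 < T" and G: "G \<in> (borel :: (real \<times> state) measure) \<rightarrow>\<^sub>M borel"
  shows "(\<lambda>\<omega>. \<integral>\<^sup>+ t. ennreal (G (t, Xproc \<omega> t)) \<partial>(restrict_space lborel {0..T})) \<in> borel_measurable (path_sigma T S0 Sig0 A0)"
    and "\<omega> \<in> Omega T S0 Sig0 A0 \<Longrightarrow> (\<lambda>t. ennreal (G (t, Xproc \<omega> t))) \<in> borel_measurable (restrict_space lborel {0..T})"
proof -
  have j: "(\<lambda>p. ennreal (G (snd p, Xproc (fst p) (snd p)))) \<in> borel_measurable (path_sigma T S0 Sig0 A0 \<Otimes>\<^sub>M restrict_space lborel {0..T})"
    by (rule measurable_compose[OF measurable_compose[OF X_joint[OF T] G] measurable_ennreal])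
  have sf: "sigma_finite_measure (restrict_space lborel {0..T})"
    by (rule sigma_finite_measure_restrict_space) (auto intro: lborel.sigma_finite_measure_axioms)
  show "(\<lambda>\<omega>. \<integral>\<^sup>+ t. ennreal (G (t, Xproc \<omega> t)) \<partial>(restrict_space lborel {0..T})) \<in> borel_measurable (path_sigma T S0 Sig0 A0)"
    by (rule sigma_finite_measure.borel_measurable_nn_integral[OF sf]) (use j in \<open>simp add: case_prod_beta\<close>)
  assume "\<omega> \<in> Omega T S0 Sig0 A0"
  then have "\<omega> \<in> space (path_sigma T S0 Sig0 A0)" by (simp add: space_path_sigma)
  from measurable_Pair2[OF j this] show "(\<lambda>t. ennreal (G (t, Xproc \<omega> t))) \<in> borel_measurable (restrict_space lborel {0..T})" by simp
qed



lemma quart: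
  fixes x y :: real assumes "0 \<le> x" "0 \<le> y"
  shows "(x + y)^4 \<le> 8 * (x^4 + y^4)"
proof -
  have h1: "(x+y)^2 \<le> 2*(x^2+y^2)" using sum_squares_ge_zero[of "x-y" 0]
    by (simp add: power2_eq_square algebra_simps)
  have h2: "(x^2+y^2)^2 \<le> 2*(x^4+y^4)"
  proof -
    have "0 \<le> (x^2 - y^2)^2" by simp
    then show ?thesis by (simp add: power2_eq_square algebra_simps power4_eq_xxxx)
  qed
  have "(x+y)^4 = ((x+y)^2)^2" by (simp add: power_mult[symmetric])
  also have "\<dots> \<le> (2*(x^2+y^2))^2" using h1 by (intro power_mono) auto
  also have "\<dots> = 4*(x^2+y^2)^2" by (simp add: power2_eq_square algebra_simps)
  also have "\<dots> \<le> 8*(x^4+y^4)" using h2 by simp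
  finally show ?thesis .
qed

lemma ind_pow:
  fixes k :: real
  shows "indicator A z * \<bar>k\<bar> powr 4 = (indicator A z * k)^4"
proof -
  have "\<bar>k\<bar> powr 4 = \<bar>k\<bar>^4" by (simp add: powr_numeral)
  also have "\<dots> = k^4" by simp
  finally show ?thesis by (cases "z \<in> A") auto
qed

lemma inLp_alt:
  "inLp T PP 4 K \<longleftrightarrow>
     (\<lambda>(t, x). indicator (D0 T) (t, x) * K t x) \<in> borel_measurable borel \<and>
     (\<exists>C::real. \<forall>P\<in>PP.
        (\<integral>\<^sup>+ \<omega>. (\<integral>\<^sup>+ t. ennreal ((indicator (D0 T) (t, Xproc \<omega> t) * K t (Xproc \<omega> t))^4)
              \<partial>(restrict_space lborel {0..T})) \<partial>P) \<le> ennreal C)"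
  unfolding inLp_def ind_pow ..

lemma inLp_comb:
  assumes T: "0 < T"
    and PP: "\<forall>P\<in>PP. space P = Omega T S0 Sig0 A0 \<and> sets P = sets (path_sigma T S0 Sig0 A0)"
    and f: "inLp T PP 4 f" and g: "inLp T PP 4 g" and a: "0 \<le> a" and b: "0 \<le> b"
  shows "inLp T PP 4 (\<lambda>t x. a * \<bar>f t x\<bar> + b * \<bar>g t x\<bar>)"
proof -
  define hf where "hf = (\<lambda>(t, x). indicator (D0 T) (t, x) * f t x)"
  define hg where "hg = (\<lambda>(t, x). indicator (D0 T) (t, x) * g t x)"
  define R where "R = restrict_space lborel {0..(T::real)}"
  obtain Cf where hfm: "hf \<in> borel_measurable borel" and Cf: "\<forall>P\<in>PP.
        (\<integral>\<^sup>+ \<omega>. (\<integral>\<^sup>+ t. ennreal ((hf (t, Xproc \<omega> t))^4) \<partial>R) \<partial>P) \<le> ennreal Cf"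
    using f unfolding inLp_alt hf_def R_def by auto
  obtain Cg where hgm: "hg \<in> borel_measurable borel" and Cg: "\<forall>P\<in>PP.
        (\<integral>\<^sup>+ \<omega>. (\<integral>\<^sup>+ t. ennreal ((hg (t, Xproc \<omega> t))^4) \<partial>R) \<partial>P) \<le> ennreal Cg"
    using g unfolding inLp_alt hg_def R_def by auto
  have ind_eq: "indicator (D0 T) (t, x) * (a * \<bar>f t x\<bar> + b * \<bar>g t x\<bar>) = a * \<bar>hf (t, x)\<bar> + b * \<bar>hg (t, x)\<bar>" for t x
    unfolding hf_def hg_def by (cases "(t, x) \<in> D0 T") auto
  have hsm: "(\<lambda>z. a * \<bar>hf z\<bar> + b * \<bar>hg z\<bar>) \<in> borel_measurable borel"
    by (intro borel_measurable_add borel_measurable_times borel_measurable_const borel_measurable_abs hfm hgm)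
  have pf: "(\<lambda>z. (hf z)^4) \<in> borel_measurable borel" by (intro borel_measurable_power hfm)
  have pg: "(\<lambda>z. (hg z)^4) \<in> borel_measurable borel" by (intro borel_measurable_power hgm)
  define c1 where "c1 = ennreal (8 * a^4)"
  define c2 where "c2 = ennreal (8 * b^4)"
  define Jf where "Jf \<omega> = (\<integral>\<^sup>+ t. ennreal ((hf (t, Xproc \<omega> t))^4) \<partial>R)" for \<omega>
  define Jg where "Jg \<omega> = (\<integral>\<^sup>+ t. ennreal ((hg (t, Xproc \<omega> t))^4) \<partial>R)" for \<omega>
  have Jfm: "Jf \<in> borel_measurable (path_sigma T S0 Sig0 A0)"
    unfolding Jf_def R_def using J_meas(1)[OF T pf] by simp
  have Jgm: "Jg \<in> borel_measurable (path_sigma T S0 Sig0 A0)"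
    unfolding Jg_def R_def using J_meas(1)[OF T pg] by simp
  have inner: "(\<integral>\<^sup>+ t. ennreal ((a * \<bar>hf (t, Xproc \<omega> t)\<bar> + b * \<bar>hg (t, Xproc \<omega> t)\<bar>)^4) \<partial>R)
      \<le> c1 * Jf \<omega> + c2 * Jg \<omega>" if om: "\<omega> \<in> Omega T S0 Sig0 A0" for \<omega>
  proof -
    have mf: "(\<lambda>t. ennreal ((hf (t, Xproc \<omega> t))^4)) \<in> borel_measurable R"
      unfolding R_def using J_meas(2)[OF T pf om] by simp
    have mg: "(\<lambda>t. ennreal ((hg (t, Xproc \<omega> t))^4)) \<in> borel_measurable R"
      unfolding R_def using J_meas(2)[OF T pg om] by simp
    have "(\<integral>\<^sup>+ t. ennreal ((a * \<bar>hf (t, Xproc \<omega> t)\<bar> + b * \<bar>hg (t, Xproc \<omega> t)\<bar>)^4) \<partial>R)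
        \<le> (\<integral>\<^sup>+ t. (c1 * ennreal ((hf (t, Xproc \<omega> t))^4) + c2 * ennreal ((hg (t, Xproc \<omega> t))^4)) \<partial>R)"
    proof (rule nn_integral_mono)
      fix t
      define u where "u = hf (t, Xproc \<omega> t)"
      define v where "v = hg (t, Xproc \<omega> t)"
      have "(a * \<bar>u\<bar> + b * \<bar>v\<bar>)^4 \<le> 8 * ((a * \<bar>u\<bar>)^4 + (b * \<bar>v\<bar>)^4)"
        using a b by (intro quart) auto
      also have "\<dots> = 8 * a^4 * u^4 + 8 * b^4 * v^4" by (simp add: power_mult_distrib algebra_simps)
      finally have r: "(a * \<bar>u\<bar> + b * \<bar>v\<bar>)^4 \<le> 8 * a^4 * u^4 + 8 * b^4 * v^4" .
      have "ennreal ((a * \<bar>u\<bar> + b * \<bar>v\<bar>)^4) \<le> ennreal (8 * a^4 * u^4 + 8 * b^4 * v^4)"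
        by (rule ennreal_leI[OF r])
      also have "\<dots> = ennreal (8 * a^4 * u^4) + ennreal (8 * b^4 * v^4)"
        by (rule ennreal_plus) (use a b in auto)
      also have "\<dots> = c1 * ennreal (u^4) + c2 * ennreal (v^4)"
        unfolding c1_def c2_def using a b by (simp add: ennreal_mult)
      finally show "ennreal ((a * \<bar>hf (t, Xproc \<omega> t)\<bar> + b * \<bar>hg (t, Xproc \<omega> t)\<bar>)^4)
          \<le> c1 * ennreal ((hf (t, Xproc \<omega> t))^4) + c2 * ennreal ((hg (t, Xproc \<omega> t))^4)"
        unfolding u_def v_def .
    qed
    also have "\<dots> = (\<integral>\<^sup>+ t. c1 * ennreal ((hf (t, Xproc \<omega> t))^4) \<partial>R) + (\<integral>\<^sup>+ t. c2 * ennreal ((hg (t, Xproc \<omega> t))^4) \<partial>R)"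
      by (rule nn_integral_add) (use mf mg in measurable)
    also have "\<dots> = c1 * Jf \<omega> + c2 * Jg \<omega>"
      unfolding Jf_def Jg_def by (simp add: nn_integral_cmult[OF mf] nn_integral_cmult[OF mg])
    finally show ?thesis .
  qed
  show ?thesis
    unfolding inLp_alt
  proof (intro conjI exI[of _ "8 * a^4 * max Cf 0 + 8 * b^4 * max Cg 0"] ballI)
    have "(\<lambda>(t, x). indicator (D0 T) (t, x) * (a * \<bar>f t x\<bar> + b * \<bar>g t x\<bar>)) = (\<lambda>z. a * \<bar>hf z\<bar> + b * \<bar>hg z\<bar>)"
      using ind_eq by auto
    then show "(\<lambda>(t, x). indicator (D0 T) (t, x) * (a * \<bar>f t x\<bar> + b * \<bar>g t x\<bar>)) \<in> borel_measurable borel"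
      using hsm by simp
  next
    fix P assume P: "P \<in> PP"
    have spP: "space P = Omega T S0 Sig0 A0" and seP: "sets P = sets (path_sigma T S0 Sig0 A0)"
      using PP P by auto
    have JfP: "Jf \<in> borel_measurable P" using Jfm measurable_cong_sets[OF seP refl] by blast
    have JgP: "Jg \<in> borel_measurable P" using Jgm measurable_cong_sets[OF seP refl] by blast
    have "(\<integral>\<^sup>+ \<omega>. (\<integral>\<^sup>+ t. ennreal ((indicator (D0 T) (t, Xproc \<omega> t) * (a * \<bar>f t (Xproc \<omega> t)\<bar> + b * \<bar>g t (Xproc \<omega> t)\<bar>))^4) \<partial>R) \<partial>P)
        = (\<integral>\<^sup>+ \<omega>. (\<integral>\<^sup>+ t. ennreal ((a * \<bar>hf (t, Xproc \<omega> t)\<bar> + b * \<bar>hg (t, Xproc \<omega> t)\<bar>)^4) \<partial>R) \<partial>P)"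
      by (simp only: ind_eq)
    also have "\<dots> \<le> (\<integral>\<^sup>+ \<omega>. (c1 * Jf \<omega> + c2 * Jg \<omega>) \<partial>P)"
      by (rule nn_integral_mono) (use inner spP in auto)
    also have "\<dots> = (\<integral>\<^sup>+ \<omega>. c1 * Jf \<omega> \<partial>P) + (\<integral>\<^sup>+ \<omega>. c2 * Jg \<omega> \<partial>P)"
      by (rule nn_integral_add) (use JfP JgP in measurable)
    also have "\<dots> = c1 * (\<integral>\<^sup>+ \<omega>. Jf \<omega> \<partial>P) + c2 * (\<integral>\<^sup>+ \<omega>. Jg \<omega> \<partial>P)"
      by (simp add: nn_integral_cmult[OF JfP] nn_integral_cmult[OF JgP])
    also have "\<dots> \<le> c1 * ennreal (max Cf 0) + c2 * ennreal (max Cg 0)"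
    proof -
      have "(\<integral>\<^sup>+ \<omega>. Jf \<omega> \<partial>P) \<le> ennreal (max Cf 0)"
        using Cf P unfolding Jf_def by (meson ennreal_leI max.cobounded1 order_trans)
      moreover have "(\<integral>\<^sup>+ \<omega>. Jg \<omega> \<partial>P) \<le> ennreal (max Cg 0)"
        using Cg P unfolding Jg_def by (meson ennreal_leI max.cobounded1 order_trans)
      ultimately show ?thesis by (intro add_mono mult_left_mono) auto
    qed
    also have "\<dots> = ennreal (8 * a^4 * max Cf 0 + 8 * b^4 * max Cg 0)"
      proof -
        have "ennreal (8 * a^4 * max Cf 0 + 8 * b^4 * max Cg 0) = ennreal (8 * a^4 * max Cf 0) + ennreal (8 * b^4 * max Cg 0)"
          by (rule ennreal_plus) (use a b in auto)
        then show ?thesis unfolding c1_def c2_def using a b by (simp add: ennreal_mult)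
      qed
    finally show "(\<integral>\<^sup>+ \<omega>. (\<integral>\<^sup>+ t. ennreal ((indicator (D0 T) (t, Xproc \<omega> t) * (a * \<bar>f t (Xproc \<omega> t)\<bar> + b * \<bar>g t (Xproc \<omega> t)\<bar>))^4) \<partial>restrict_space lborel {0..T}) \<partial>P)
        \<le> ennreal (8 * a^4 * max Cf 0 + 8 * b^4 * max Cg 0)" unfolding R_def .
  qed
qed


lemma pure_ineq:
  fixes \<nu> s Sig e \<xi> n Su k1 k3 k4 k5 :: real
  assumes h1: "\<bar>\<nu>\<bar> \<le> n" and h2: "\<bar>s - Sig\<bar> \<le> n" and h3: "\<bar>e\<bar> \<le> n" and h4: "0 \<le> \<xi>" "\<xi> \<le> n"
    and h5: "0 < Sig" "Sig \<le> Su"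
  shows "\<bar>\<nu> * k1 + 1/2 * (s\<^sup>2 - Sig\<^sup>2) * k3 + s * e * k4 + 1/2 * (e\<^sup>2 + \<xi>) * k5\<bar>
     \<le> n * max 1 n * ((1 * \<bar>k1\<bar> + (Su + 1) * \<bar>k3\<bar>) + ((Su + 1) * \<bar>k4\<bar> + 1 * \<bar>k5\<bar>))"
proof -
  define m where "m = max 1 n"
  have n0: "0 \<le> n" using h1 by linarith
  have nm: "n \<le> n * m" using n0 unfolding m_def by (simp add: mult_le_cancel_left1)
  have n2: "n * n \<le> n * m" using n0 unfolding m_def by (intro mult_left_mono) auto
  have nm0: "0 \<le> n * m" using n0 nm by linarith
  have a1: "\<bar>\<nu> * k1\<bar> \<le> n * m * \<bar>k1\<bar>"
  proof -
    have "\<bar>\<nu> * k1\<bar> = \<bar>\<nu>\<bar> * \<bar>k1\<bar>" by (simp add: abs_mult)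
    also have "\<dots> \<le> n * \<bar>k1\<bar>" using h1 by (intro mult_right_mono) auto
    also have "\<dots> \<le> n * m * \<bar>k1\<bar>" using nm by (intro mult_right_mono) auto
    finally show ?thesis .
  qed
  have a3: "\<bar>1/2 * (s\<^sup>2 - Sig\<^sup>2) * k3\<bar> \<le> n * m * ((Su + 1) * \<bar>k3\<bar>)"
  proof -
    have sp: "\<bar>s + Sig\<bar> \<le> n + 2 * Su" using h2 h5 by linarith
    have "\<bar>s\<^sup>2 - Sig\<^sup>2\<bar> = \<bar>s - Sig\<bar> * \<bar>s + Sig\<bar>" by (simp add: power2_eq_square abs_mult[symmetric] algebra_simps)
    also have "\<dots> \<le> n * (n + 2 * Su)" using h2 sp n0 by (intro mult_mono) auto
    also have "\<dots> = n * n + 2 * Su * n" by (simp add: algebra_simps)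
    also have "\<dots> \<le> n * m + 2 * Su * (n * m)" using n2 nm h5 by (intro add_mono[OF n2 mult_left_mono]) auto
    finally have q: "\<bar>s\<^sup>2 - Sig\<^sup>2\<bar> \<le> (2 * Su + 1) * (n * m)" by (simp add: algebra_simps)
    have "\<bar>1/2 * (s\<^sup>2 - Sig\<^sup>2) * k3\<bar> = 1/2 * \<bar>s\<^sup>2 - Sig\<^sup>2\<bar> * \<bar>k3\<bar>" by (simp add: abs_mult)
    also have "\<dots> \<le> 1/2 * ((2 * Su + 1) * (n * m)) * \<bar>k3\<bar>" using q by (intro mult_right_mono) auto
    also have "\<dots> \<le> (Su + 1) * (n * m) * \<bar>k3\<bar>"
    proof (rule mult_right_mono)
      show "1/2 * ((2 * Su + 1) * (n * m)) \<le> (Su + 1) * (n * m)" using nm0 by (simp add: algebra_simps)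
    qed simp
    also have "\<dots> = n * m * ((Su + 1) * \<bar>k3\<bar>)" by (simp add: mult_ac)
    finally show ?thesis .
  qed
  have a4: "\<bar>s * e * k4\<bar> \<le> n * m * ((Su + 1) * \<bar>k4\<bar>)"
  proof -
    have ss: "\<bar>s\<bar> \<le> Su + n" using h2 h5 by linarith
    have "\<bar>s * e\<bar> = \<bar>s\<bar> * \<bar>e\<bar>" by (simp add: abs_mult)
    also have "\<dots> \<le> (Su + n) * n" using ss h3 h5 by (intro mult_mono) auto
    also have "\<dots> = Su * n + n * n" by (simp add: algebra_simps)
    also have "\<dots> \<le> Su * (n * m) + n * m" using nm n2 h5 by (intro add_mono[OF mult_left_mono n2]) auto
    finally have q: "\<bar>s * e\<bar> \<le> (Su + 1) * (n * m)" by (simp add: algebra_simps)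
    have "\<bar>s * e * k4\<bar> = \<bar>s * e\<bar> * \<bar>k4\<bar>" by (simp add: abs_mult)
    also have "\<dots> \<le> (Su + 1) * (n * m) * \<bar>k4\<bar>" using q by (intro mult_right_mono) auto
    also have "\<dots> = n * m * ((Su + 1) * \<bar>k4\<bar>)" by (simp add: mult_ac)
    finally show ?thesis .
  qed
  have a5: "\<bar>1/2 * (e\<^sup>2 + \<xi>) * k5\<bar> \<le> n * m * \<bar>k5\<bar>"
  proof -
    have ee: "\<bar>e\<bar> * \<bar>e\<bar> \<le> n * n" using h3 by (intro mult_mono) auto
    have "e\<^sup>2 = \<bar>e\<bar> * \<bar>e\<bar>" by (simp add: power2_eq_square abs_mult[symmetric])
    then have "e\<^sup>2 \<le> n * n" using ee by simp
    then have q0: "e\<^sup>2 + \<xi> \<le> 2 * (n * m)" using h4 n2 nm by linarith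
    then have q: "1/2 * (e\<^sup>2 + \<xi>) \<le> n * m" by simp
    have "\<bar>1/2 * (e\<^sup>2 + \<xi>) * k5\<bar> = 1/2 * (e\<^sup>2 + \<xi>) * \<bar>k5\<bar>" using h4 by (simp add: abs_mult)
    also have "\<dots> \<le> n * m * \<bar>k5\<bar>" using q by (intro mult_right_mono) auto
    finally show ?thesis .
  qed
  have "\<bar>\<nu> * k1 + 1/2 * (s\<^sup>2 - Sig\<^sup>2) * k3 + s * e * k4 + 1/2 * (e\<^sup>2 + \<xi>) * k5\<bar>
     \<le> \<bar>\<nu> * k1\<bar> + \<bar>1/2 * (s\<^sup>2 - Sig\<^sup>2) * k3\<bar> + \<bar>s * e * k4\<bar> + \<bar>1/2 * (e\<^sup>2 + \<xi>) * k5\<bar>"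
    by linarith
  also have "\<dots> \<le> n * m * \<bar>k1\<bar> + n * m * ((Su + 1) * \<bar>k3\<bar>) + n * m * ((Su + 1) * \<bar>k4\<bar>) + n * m * \<bar>k5\<bar>"
    using a1 a3 a4 a5 by linarith
  also have "\<dots> = n * m * ((1 * \<bar>k1\<bar> + (Su + 1) * \<bar>k3\<bar>) + ((Su + 1) * \<bar>k4\<bar> + 1 * \<bar>k5\<bar>))"
    by (simp add: algebra_simps)
  finally show ?thesis unfolding m_def .
qed
theorem proposition5p10:
  fixes T S0 Sig0 A0 Sl Su nul nuu sl su el eu xu Kw :: real
    and PP :: "path measure set"
    and \<alpha> \<beta> \<gamma> :: "real \<Rightarrow> real \<Rightarrow> real \<Rightarrow> real \<Rightarrow> real"
    and w wt wS wA wM wSig wSS wSA wAA wSSig wASig wSigSig :: "real \<Rightarrow> state \<Rightarrow> real"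
  assumes T: "0 < T" and S0: "0 < S0" and Sig0: "0 < Sig0"
    and Sbounds: "0 < Sl" "Sl < Sig0" "Sig0 < Su"
    and Zbounds: "nul < 0" "0 < nuu" "0 < sl" "sl < Sl" "Su < su" "el < 0" "0 < eu" "0 < xu"
    and PP: "\<forall>P\<in>PP. prob_space P \<and> space P = Omega T S0 Sig0 A0
                      \<and> sets P = sets (path_sigma T S0 Sig0 A0)"
    and coef_meas: "(\<lambda>(t, S, A, M). \<alpha> t S A M) \<in> borel_measurable borel"
                   "(\<lambda>(t, S, A, M). \<beta> t S A M) \<in> borel_measurable borel"
                   "(\<lambda>(t, S, A, M). \<gamma> t S A M) \<in> borel_measurable borel"
    and deriv1: "\<forall>(t, S, A, M, Sig) \<in> D0 T.
            ((\<lambda>u. w u (S, A, M, Sig)) has_real_derivative wt t (S, A, M, Sig)) (at t)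
          \<and> ((\<lambda>u. w t (u, A, M, Sig)) has_real_derivative wS t (S, A, M, Sig)) (at S)
          \<and> ((\<lambda>u. w t (S, u, M, Sig)) has_real_derivative wA t (S, A, M, Sig)) (at A)
          \<and> ((\<lambda>u. w t (S, A, u, Sig)) has_real_derivative wM t (S, A, M, Sig)) (at M)
          \<and> ((\<lambda>u. w t (S, A, M, u)) has_real_derivative wSig t (S, A, M, Sig)) (at Sig)"
    and deriv2: "\<forall>(t, S, A, M, Sig) \<in> D0 T.
            ((\<lambda>u. wS t (u, A, M, Sig)) has_real_derivative wSS t (S, A, M, Sig)) (at S)
          \<and> ((\<lambda>u. wS t (S, u, M, Sig)) has_real_derivative wSA t (S, A, M, Sig)) (at A)
          \<and> ((\<lambda>u. wA t (S, u, M, Sig)) has_real_derivative wAA t (S, A, M, Sig)) (at A)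
          \<and> ((\<lambda>u. wS t (S, A, M, u)) has_real_derivative wSSig t (S, A, M, Sig)) (at Sig)
          \<and> ((\<lambda>u. wA t (S, A, M, u)) has_real_derivative wASig t (S, A, M, Sig)) (at Sig)
          \<and> ((\<lambda>u. wSig t (S, A, M, u)) has_real_derivative wSigSig t (S, A, M, Sig)) (at Sig)"
    and cont: "\<forall>f \<in> {w, wt, wS, wA, wM, wSig, wSS, wSA, wAA, wSSig, wASig, wSigSig}.
                 continuous_on (D0 T) (\<lambda>(t, x). f t x)"
    and wbound: "\<forall>(t, x) \<in> Dset T Sl Su. 0 \<le> w t x \<and> w t x \<le> Kw"
    and L4: "inLp T PP 4 wSig"
            "inLp T PP 4 (\<lambda>t (S, A, M, Sig). S * (wS t (S, A, M, Sig) + \<gamma> t S A M * wA t (S, A, M, Sig)))"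
            "inLp T PP 4 (\<lambda>t (S, A, M, Sig). \<beta> t S A M * wA t (S, A, M, Sig)
                 + S\<^sup>2 * (wSS t (S, A, M, Sig) + 2 * \<gamma> t S A M * wSA t (S, A, M, Sig)
                          + (\<gamma> t S A M)\<^sup>2 * wAA t (S, A, M, Sig)))"
            "inLp T PP 4 (\<lambda>t (S, A, M, Sig). S * (wSSig t (S, A, M, Sig) + \<gamma> t S A M * wASig t (S, A, M, Sig)))"
            "inLp T PP 4 wSigSig"
  shows "\<exists>K3. inLp T PP 4 K3 \<and>
           (\<forall>t x \<zeta>. (t, x) \<in> Dset T Sl Su \<and> \<zeta> \<in> Zset nul nuu sl su el eu xu \<longrightarrow>
              \<bar>H3 \<alpha> \<beta> \<gamma> wSig wA wSS wSA wAA wSSig wASig wSigSig t x \<zeta>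
               - H3 \<alpha> \<beta> \<gamma> wSig wA wSS wSA wAA wSSig wASig wSigSig t x (zeta0 (sig_of x))\<bar>
              \<le> K3 t x * norm (\<zeta> - zeta0 (sig_of x)) * max 1 (norm (\<zeta> - zeta0 (sig_of x))))"
  proof -
  have PP': "\<forall>P\<in>PP. space P = Omega T S0 Sig0 A0 \<and> sets P = sets (path_sigma T S0 Sig0 A0)"
    using PP by auto
  define k3 where "k3 = (\<lambda>t (S, A, M, Sig). \<beta> t S A M * wA t (S, A, M, Sig)
                 + S\<^sup>2 * (wSS t (S, A, M, Sig) + 2 * \<gamma> t S A M * wSA t (S, A, M, Sig)
                          + (\<gamma> t S A M)\<^sup>2 * wAA t (S, A, M, Sig)))"
  define k4 where "k4 = (\<lambda>t (S, A, M, Sig). S * (wSSig t (S, A, M, Sig) + \<gamma> t S A M * wASig t (S, A, M, Sig)))"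
  have L3: "inLp T PP 4 k3" using L4(3) unfolding k3_def .
  have L4': "inLp T PP 4 k4" using L4(4) unfolding k4_def .
  define KA where "KA = (\<lambda>t x. 1 * \<bar>wSig t x\<bar> + (Su + 1) * \<bar>k3 t x\<bar>)"
  define KB where "KB = (\<lambda>t x. (Su + 1) * \<bar>k4 t x\<bar> + 1 * \<bar>wSigSig t x\<bar>)"
  define K3 where "K3 = (\<lambda>t x. 1 * \<bar>KA t x\<bar> + 1 * \<bar>KB t x\<bar>)"
  have Su0: "0 < Su" using Sbounds by linarith
  have LA: "inLp T PP 4 KA" unfolding KA_def
    by (rule inLp_comb[OF T PP' L4(1) L3]) (use Su0 in auto)
  have LB: "inLp T PP 4 KB" unfolding KB_def
    by (rule inLp_comb[OF T PP' L4' L4(5)]) (use Su0 in auto)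
  have LK: "inLp T PP 4 K3" unfolding K3_def
    by (rule inLp_comb[OF T PP' LA LB]) auto
  show ?thesis
  proof (intro exI[of _ K3] conjI LK allI impI)
    fix t x \<zeta> assume tx: "(t, x) \<in> Dset T Sl Su \<and> \<zeta> \<in> Zset nul nuu sl su el eu xu"
    obtain S A M Sig where x: "x = (S, A, M, Sig)" by (cases x) auto
    obtain \<nu> s e \<xi> where z: "\<zeta> = (\<nu>, s, e, \<xi>)" by (cases \<zeta>) auto
    have Sig: "Sl \<le> Sig" "Sig \<le> Su" using tx unfolding x Dset_def by auto
    have xi: "0 \<le> \<xi>" using tx unfolding z Zset_def by auto
    have sg: "sig_of x = Sig" unfolding x sig_of_def by simp
    have dz: "\<zeta> - zeta0 (sig_of x) = (\<nu>, s - Sig, e, \<xi>)" unfolding z sg zeta0_def by simp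
    define n where "n = norm (\<nu>, s - Sig, e, \<xi>)"
    have b1: "\<bar>\<nu>\<bar> \<le> n" unfolding n_def using norm_fst_le[of \<nu> "(s - Sig, e, \<xi>)"] by simp
    have b2: "\<bar>s - Sig\<bar> \<le> n" unfolding n_def
      using norm_fst_le[of "s - Sig" "(e, \<xi>)"] norm_snd_le[of "(s - Sig, e, \<xi>)" \<nu>] by simp
    have b3: "\<bar>e\<bar> \<le> n" unfolding n_def
      using norm_fst_le[of e \<xi>] norm_snd_le[of "(e, \<xi>)" "s - Sig"] norm_snd_le[of "(s - Sig, e, \<xi>)" \<nu>] by simp
    have b4: "\<xi> \<le> n" unfolding n_def
      using norm_snd_le[of \<xi> e] norm_snd_le[of "(e, \<xi>)" "s - Sig"] norm_snd_le[of "(s - Sig, e, \<xi>)" \<nu>] by simp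
    have diff: "H3 \<alpha> \<beta> \<gamma> wSig wA wSS wSA wAA wSSig wASig wSigSig t x \<zeta>
               - H3 \<alpha> \<beta> \<gamma> wSig wA wSS wSA wAA wSSig wASig wSigSig t x (zeta0 (sig_of x))
       = \<nu> * wSig t x + 1/2 * (s\<^sup>2 - Sig\<^sup>2) * k3 t x + s * e * k4 t x + 1/2 * (e\<^sup>2 + \<xi>) * wSigSig t x"
      unfolding x z sg by (simp add: H3_def zeta0_def sig_of_def k3_def k4_def power2_eq_square algebra_simps)
    have Keq: "K3 t x = (1 * \<bar>wSig t x\<bar> + (Su + 1) * \<bar>k3 t x\<bar>) + ((Su + 1) * \<bar>k4 t x\<bar> + 1 * \<bar>wSigSig t x\<bar>)"
      unfolding K3_def KA_def KB_def using Su0 by simp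
    have bnd: "\<bar>\<nu> * wSig t x + 1/2 * (s\<^sup>2 - Sig\<^sup>2) * k3 t x + s * e * k4 t x + 1/2 * (e\<^sup>2 + \<xi>) * wSigSig t x\<bar>
       \<le> n * max 1 n * ((1 * \<bar>wSig t x\<bar> + (Su + 1) * \<bar>k3 t x\<bar>) + ((Su + 1) * \<bar>k4 t x\<bar> + 1 * \<bar>wSigSig t x\<bar>))"
      by (rule pure_ineq[OF b1 b2 b3 xi b4]) (use Sig Sbounds in auto)
    then show "\<bar>H3 \<alpha> \<beta> \<gamma> wSig wA wSS wSA wAA wSSig wASig wSigSig t x \<zeta>
               - H3 \<alpha> \<beta> \<gamma> wSig wA wSS wSA wAA wSSig wASig wSigSig t x (zeta0 (sig_of x))\<bar>
              \<le> K3 t x * norm (\<zeta> - zeta0 (sig_of x)) * max 1 (norm (\<zeta> - zeta0 (sig_of x)))"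
      unfolding diff Keq dz n_def[symmetric] using bnd by (simp only: mult_ac)
  qed
qed

end
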